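(* Let $A\subseteq\mathbb{R}^n$ and $B\subseteq\mathbb{R}^m$. Let $f:A\times B\to\mathbb{R}$ be continuous, with $f(a,\cdot)$ $\mu$-strongly concave for every $a\in A$ and $f$ $L$-Lipschitz on $A\times B$, and let $g:A\rightrightarrows B$ be an $L'$-Hausdorff Lipschitz continuous correspondence with non-empty, convex, compact values. Define $f^*(a)=\max_{b\in g(a)}f(a,b)$ and $g^*(a)=\arg\max_{b\in g(a)}f(a,b)$. Then $f^*$ is continuous and $g^*$ is an upper semi-continuous, non-empty, single-valued correspondence, i.e. a continuous function. Moreover $f^*$ is $(L+L L')$-Lipschitz continuous, and $g^*$ is $\big(L'+2\sqrt{4/\mu}\sqrt{L+LL'}\big)$-$(1/2)$-Hölder continuous for sufficiently small differences, i.e. $\|g^*(a_1)-g^*(a_2)\|\le\big(L'+2\sqrt{4/\mu}\sqrt{L+LL'}\big)\|a_1-a_2\|^{1/2}$ whenever $\|a_1-a_2\|$ is sufficiently small.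
   Context: $g$ is $L'$-Hausdorff Lipschitz if $d_H(g(a_1),g(a_2))\le L'\|a_1-a_2\|$, where $d_H$ is the Hausdorff distance. A correspondence $g^*$ is upper semi-continuous at $a_0$ if for every open $V\supseteq g^*(a_0)$ there is a neighborhood $U$ of $a_0$ with $g^*(a)\subseteq V$ for all $a\in U$. $f(a,\cdot)$ is $\mu$-strongly concave if $-f(a,\cdot)-\frac{\mu}{2}\|\cdot\|^2$ is convex... equivalently $f(a,\tfrac{x+y}{2})\ge\tfrac{f(a,x)+f(a,y)}{2}+\tfrac{\mu}{8}\|x-y\|^2$. *)

theory Defs
  imports "HOL-Analysis.Analysis"
begin

definition hausdorff_dist :: "'a::metric_space set \<Rightarrow> 'a set \<Rightarrow> real" where
  "hausdorff_dist X Y = max (SUP x\<in>X. infdist x Y) (SUP y\<in>Y. infdist y X)"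

definition hausdorff_lipschitz_on :: "real \<Rightarrow> 'a::metric_space set \<Rightarrow> ('a \<Rightarrow> 'b::metric_space set) \<Rightarrow> bool" where
  "hausdorff_lipschitz_on L' A g \<longleftrightarrow>
     (\<forall>a1\<in>A. \<forall>a2\<in>A. hausdorff_dist (g a1) (g a2) \<le> L' * dist a1 a2)"

definition strongly_concave_on :: "real \<Rightarrow> 'b::real_normed_vector set \<Rightarrow> ('b \<Rightarrow> real) \<Rightarrow> bool" where
  "strongly_concave_on \<mu> S h \<longleftrightarrow> convex_on S (\<lambda>x. - h x - \<mu> / 2 * (norm x)\<^sup>2)"

definition usc_at :: "'a::topological_space set \<Rightarrow> ('a \<Rightarrow> 'b::topological_space set) \<Rightarrow> 'a \<Rightarrow> bool" where
  "usc_at A G a0 \<longleftrightarrow>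
     (\<forall>V. open V \<and> G a0 \<subseteq> V \<longrightarrow> (\<exists>U. open U \<and> a0 \<in> U \<and> (\<forall>a\<in>U \<inter> A. G a \<subseteq> V)))"

definition fstar :: "('a \<times> 'b \<Rightarrow> real) \<Rightarrow> ('a \<Rightarrow> 'b set) \<Rightarrow> 'a \<Rightarrow> real" where
  "fstar f g a = (SUP b\<in>g a. f (a, b))"

definition gstar :: "('a \<times> 'b \<Rightarrow> real) \<Rightarrow> ('a \<Rightarrow> 'b set) \<Rightarrow> 'a \<Rightarrow> 'b set" where
  "gstar f g a = {b \<in> g a. \<forall>b'\<in>g a. f (a, b') \<le> f (a, b)}"

end

theory Submission
  imports Defs
begin

lemma sc_mid:
  fixes h :: "'a::real_inner \<Rightarrow> real"
  assumes sc: "strongly_concave_on \<mu> B h" and x: "x \<in> B" and y: "y \<in> B"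
  shows "h ((1/2) *\<^sub>R x + (1/2) *\<^sub>R y) \<ge> (h x + h y)/2 + \<mu>/8 * (dist x y)\<^sup>2"
proof -
  define m where "m = (1/2) *\<^sub>R x + (1/2) *\<^sub>R y"
  have c: "- h m - \<mu>/2 * (norm m)\<^sup>2 \<le> 1/2*(- h x - \<mu>/2*(norm x)\<^sup>2) + 1/2*(- h y - \<mu>/2*(norm y)\<^sup>2)"
  proof -
    have "\<forall>x\<in>B. \<forall>y\<in>B. \<forall>u\<ge>0. \<forall>v\<ge>0. u + v = 1 \<longrightarrow>
      (- h (u *\<^sub>R x + v *\<^sub>R y) - \<mu>/2 * (norm (u *\<^sub>R x + v *\<^sub>R y))\<^sup>2)
        \<le> u * (- h x - \<mu>/2*(norm x)\<^sup>2) + v * (- h y - \<mu>/2*(norm y)\<^sup>2)"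
      using sc unfolding strongly_concave_on_def convex_on_def by blast
    from this[rule_format, OF x y, of "1/2" "1/2"] show ?thesis unfolding m_def by simp
  qed
  have n1: "(norm m)\<^sup>2 = 1/4*(norm x)\<^sup>2 + 1/2*(x \<bullet> y) + 1/4*(norm y)\<^sup>2"
    unfolding m_def power2_norm_eq_inner
    by (simp add: inner_add_left inner_add_right inner_commute algebra_simps)
  have n2: "(dist x y)\<^sup>2 = (norm x)\<^sup>2 - 2*(x \<bullet> y) + (norm y)\<^sup>2"
    unfolding dist_norm power2_norm_eq_inner
    by (simp add: inner_diff_left inner_diff_right inner_commute algebra_simps)
  have e: "\<mu>/2 * ((norm x)\<^sup>2/2 + (norm y)\<^sup>2/2 - (norm m)\<^sup>2) = \<mu>/8 * (dist x y)\<^sup>2"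
    unfolding n1 n2 by (simp add: algebra_simps)
  have "h m \<ge> (h x + h y)/2 + \<mu>/2 * ((norm x)\<^sup>2/2 + (norm y)\<^sup>2/2 - (norm m)\<^sup>2)"
    using c by (simp add: algebra_simps add_divide_distrib)
  then show ?thesis using e unfolding m_def by linarith
qed

lemma sqrt_pair_le: "0 \<le> x \<Longrightarrow> 0 \<le> y \<Longrightarrow> sqrt (x\<^sup>2 + y\<^sup>2) \<le> x + y"
  by (rule real_le_lsqrt) (auto simp: power2_eq_square algebra_simps)

theorem mainTheorem16:
  fixes A :: "(real ^ 'n) set" and B :: "(real ^ 'm) set"
    and f :: "(real ^ 'n) \<times> (real ^ 'm) \<Rightarrow> real"
    and g :: "real ^ 'n \<Rightarrow> (real ^ 'm) set"
    and \<mu> L L' :: real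
  assumes mu_pos: "\<mu> > 0"
    and L'_nonneg: "L' \<ge> 0"
    and f_cont: "continuous_on (A \<times> B) f"
    and f_sconc: "\<forall>a\<in>A. strongly_concave_on \<mu> B (\<lambda>b. f (a, b))"
    and f_lip: "L-lipschitz_on (A \<times> B) f"
    and g_sub: "\<forall>a\<in>A. g a \<subseteq> B"
    and g_ne: "\<forall>a\<in>A. g a \<noteq> {}"
    and g_convex: "\<forall>a\<in>A. convex (g a)"
    and g_compact: "\<forall>a\<in>A. compact (g a)"
    and g_lip: "hausdorff_lipschitz_on L' A g"
  shows "continuous_on A (fstar f g)
    \<and> (\<forall>a\<in>A. \<exists>b. gstar f g a = {b})
    \<and> (\<forall>a\<in>A. usc_at A (gstar f g) a)
    \<and> continuous_on A (\<lambda>a. THE b. b \<in> gstar f g a)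
    \<and> (L + L * L')-lipschitz_on A (fstar f g)
    \<and> (\<exists>\<delta>>0. \<forall>a1\<in>A. \<forall>a2\<in>A. dist a1 a2 < \<delta> \<longrightarrow>
         dist (THE b. b \<in> gstar f g a1) (THE b. b \<in> gstar f g a2)
           \<le> (L' + 2 * sqrt (4 / \<mu>) * sqrt (L + L * L')) * sqrt (dist a1 a2))"
proof -
  have L0: "L \<ge> 0" using f_lip lipschitz_on_nonneg by blast
  define K where "K = L + L * L'"
  have K0: "K \<ge> 0" unfolding K_def using L0 L'_nonneg by simp
  define bs where "bs = (\<lambda>a. THE b. b \<in> gstar f g a)"
  have ex: "\<exists>b\<in>g a. \<forall>b'\<in>g a. f (a, b') \<le> f (a, b)" if a: "a \<in> A" for a
  proof -
    have "continuous_on (g a) (\<lambda>b. f (a, b))"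
    proof (rule continuous_on_compose2[OF f_cont])
      show "continuous_on (g a) (Pair a)" by (intro continuous_intros)
      show "Pair a ` g a \<subseteq> A \<times> B" using a g_sub by auto
    qed
    then show ?thesis using continuous_attains_sup[of "g a" "\<lambda>b. f (a, b)"] a g_compact g_ne by auto
  qed
  have quad: "\<mu>/4 * (dist b b')\<^sup>2 \<le> f (a, b) - f (a, b')"
    if a: "a \<in> A" and b: "b \<in> gstar f g a" and b': "b' \<in> g a" for a b b'
  proof -
    have bg: "b \<in> g a" and bmax: "\<forall>c\<in>g a. f (a, c) \<le> f (a, b)" using b unfolding gstar_def by auto
    have "(1/2) *\<^sub>R b + (1/2) *\<^sub>R b' \<in> g a"
      using g_convex a bg b' unfolding convex_def by (metis field_sum_of_halves le_divide_eq_1_pos zero_le_divide_1_iff zero_le_numeral zero_less_numeral less_eq_real_def)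
    hence "f (a, (1/2) *\<^sub>R b + (1/2) *\<^sub>R b') \<le> f (a, b)" using bmax by blast
    moreover have "f (a, (1/2) *\<^sub>R b + (1/2) *\<^sub>R b') \<ge> (f (a, b) + f (a, b'))/2 + \<mu>/8 * (dist b b')\<^sup>2"
      using sc_mid[of \<mu> B "\<lambda>c. f (a, c)" b b'] f_sconc a g_sub bg b' by auto
    moreover have "\<mu>/4 * (dist b b')\<^sup>2 = 2 * (\<mu>/8 * (dist b b')\<^sup>2)" by simp
    ultimately show ?thesis
      by (simp add: field_simps)
  qed
  have uniq: "gstar f g a = {bs a}" if a: "a \<in> A" for a
  proof -
    obtain b where b: "b \<in> gstar f g a" using ex[OF a] unfolding gstar_def by blast
    have all: "c = b" if c: "c \<in> gstar f g a" for c
    proof -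
      have cg: "c \<in> g a" and bg: "b \<in> g a" using b c unfolding gstar_def by auto
      have "\<mu>/4 * (dist c b)\<^sup>2 \<le> f (a, c) - f (a, b)" by (rule quad[OF a c bg])
      moreover have "\<mu>/4 * (dist b c)\<^sup>2 \<le> f (a, b) - f (a, c)" by (rule quad[OF a b cg])
      ultimately have "\<mu>/4 * (dist b c)\<^sup>2 \<le> 0" by (simp add: dist_commute)
      hence "(dist b c)\<^sup>2 \<le> 0" using mu_pos by (simp add: mult_le_0_iff)
      thus ?thesis by simp
    qed
    hence "bs a = b" unfolding bs_def using b by blast
    thus ?thesis using all b by blast
  qed
  have bs_in: "bs a \<in> gstar f g a" if "a \<in> A" for a using uniq[OF that] by blast
  have bs_g: "bs a \<in> g a" and bs_max: "\<And>c. c \<in> g a \<Longrightarrow> f (a, c) \<le> f (a, bs a)" if "a \<in> A" for a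
    using bs_in[OF that] unfolding gstar_def by auto
  have fs: "fstar f g a = f (a, bs a)" if a: "a \<in> A" for a
    unfolding fstar_def by (rule cSup_eq_maximum) (use bs_g[OF a] bs_max[OF a] in auto)
  have near: "\<exists>b'\<in>g a2. dist b b' \<le> L' * dist a1 a2"
    if a1: "a1 \<in> A" and a2: "a2 \<in> A" and b: "b \<in> g a1" for a1 a2 b
  proof -
    obtain b' where b': "b' \<in> g a2" "infdist b (g a2) = dist b b'"
      using infdist_attains_inf[of "g a2" b] g_compact g_ne a2 compact_imp_closed by blast
    have "continuous_on (g a1) (\<lambda>x. infdist x (g a2))" by (intro continuous_intros)
    hence "compact ((\<lambda>x. infdist x (g a2)) ` g a1)" using g_compact a1 compact_continuous_image by blast
    hence bdd: "bdd_above ((\<lambda>x. infdist x (g a2)) ` g a1)" by (simp add: bounded_imp_bdd_above compact_imp_bounded)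
    have "infdist b (g a2) \<le> (SUP x\<in>g a1. infdist x (g a2))" by (rule cSUP_upper[OF b bdd])
    also have "\<dots> \<le> hausdorff_dist (g a1) (g a2)" unfolding hausdorff_dist_def by simp
    also have "\<dots> \<le> L' * dist a1 a2" using g_lip a1 a2 unfolding hausdorff_lipschitz_on_def by blast
    finally show ?thesis using b' by auto
  qed
  have pd: "dist (a1, b1) (a2, b2) \<le> dist a1 a2 + L' * dist a1 a2"
    if "dist b1 b2 \<le> L' * dist a1 a2" for a1 a2 :: "real ^ 'n" and b1 b2 :: "real ^ 'm"
  proof -
    have "dist (a1, b1) (a2, b2) = sqrt ((dist a1 a2)\<^sup>2 + (dist b1 b2)\<^sup>2)" by (simp add: dist_Pair_Pair)
    also have "\<dots> \<le> dist a1 a2 + dist b1 b2" by (rule sqrt_pair_le) auto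
    finally show ?thesis using that by linarith
  qed
  have side: "fstar f g a1 - f (a2, b') \<le> K * dist a1 a2"
    if a1: "a1 \<in> A" and a2: "a2 \<in> A" and b': "b' \<in> g a2" "dist (bs a1) b' \<le> L' * dist a1 a2" for a1 a2 b'
  proof -
    have "f (a1, bs a1) - f (a2, b') \<le> dist (f (a1, bs a1)) (f (a2, b'))" by (simp add: dist_real_def)
    also have "\<dots> \<le> L * dist (a1, bs a1) (a2, b')"
      by (rule lipschitz_onD[OF f_lip]) (use a1 a2 b' bs_g g_sub in auto)
    also have "\<dots> \<le> L * (dist a1 a2 + L' * dist a1 a2)" by (rule mult_left_mono[OF pd[OF b'(2)] L0])
    also have "\<dots> = K * dist a1 a2" unfolding K_def by (simp add: algebra_simps)
    finally show ?thesis using fs[OF a1] by simp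
  qed
  have onel: "fstar f g a1 - fstar f g a2 \<le> K * dist a1 a2" if a1: "a1 \<in> A" and a2: "a2 \<in> A" for a1 a2
  proof -
    obtain b' where b': "b' \<in> g a2" "dist (bs a1) b' \<le> L' * dist a1 a2" using near[OF a1 a2 bs_g[OF a1]] by blast
    have "f (a2, b') \<le> fstar f g a2" using fs[OF a2] bs_max[OF a2 b'(1)] by simp
    thus ?thesis using side[OF a1 a2 b'] by linarith
  qed
  have flip: "K-lipschitz_on A (fstar f g)"
  proof (rule lipschitz_onI)
    fix x y assume "x \<in> A" "y \<in> A"
    then show "dist (fstar f g x) (fstar f g y) \<le> K * dist x y"
      using onel[of x y] onel[of y x] by (simp add: dist_real_def dist_commute abs_le_iff)
  qed (rule K0)
  define C where "C = L' + 2 * sqrt (4 / \<mu>) * sqrt K"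
  have C0: "C \<ge> 0" unfolding C_def using L'_nonneg K0 mu_pos by simp
  have hold: "dist (bs a1) (bs a2) \<le> C * sqrt (dist a1 a2)"
    if a1: "a1 \<in> A" and a2: "a2 \<in> A" and d1: "dist a1 a2 < 1" for a1 a2
  proof -
    define d where "d = dist a1 a2"
    have d0: "d \<ge> 0" unfolding d_def by simp
    obtain b' where b': "b' \<in> g a2" "dist (bs a1) b' \<le> L' * d" using near[OF a1 a2 bs_g[OF a1]] unfolding d_def by blast
    have "\<mu>/4 * (dist (bs a2) b')\<^sup>2 \<le> f (a2, bs a2) - f (a2, b')" by (rule quad[OF a2 bs_in[OF a2] b'(1)])
    also have "\<dots> = (fstar f g a2 - fstar f g a1) + (fstar f g a1 - f (a2, b'))" using fs[OF a2] by simp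
    also have "\<dots> \<le> K * d + K * d" using onel[OF a2 a1] side[OF a1 a2 b'(1)] b'(2) unfolding d_def
      by (simp add: dist_commute add_mono)
    finally have q: "\<mu>/4 * (dist (bs a2) b')\<^sup>2 \<le> 2 * K * d" by simp
    have "(dist (bs a2) b')\<^sup>2 \<le> 4/\<mu> * 2 * K * d"
    proof -
      have "(dist (bs a2) b')\<^sup>2 = 4/\<mu> * (\<mu>/4 * (dist (bs a2) b')\<^sup>2)" using mu_pos by simp
      also have "\<dots> \<le> 4/\<mu> * (2 * K * d)" by (rule mult_left_mono[OF q]) (use mu_pos in simp)
      finally show ?thesis by simp
    qed
    hence "dist (bs a2) b' \<le> sqrt (4/\<mu> * 2 * K * d)" by (rule real_le_rsqrt)
    also have "\<dots> = sqrt (4/\<mu>) * sqrt 2 * sqrt K * sqrt d" by (simp only: real_sqrt_mult)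
    also have "\<dots> \<le> sqrt (4/\<mu>) * 2 * sqrt K * sqrt d"
    proof -
      have "sqrt 2 \<le> (2::real)" by (rule real_le_lsqrt) auto
      thus ?thesis using mu_pos K0 d0 by (intro mult_right_mono mult_left_mono) auto
    qed
    finally have e2: "dist (bs a2) b' \<le> 2 * sqrt (4/\<mu>) * sqrt K * sqrt d" by simp
    have "d \<le> sqrt d"
    proof -
      have "d * d \<le> d * 1" using d0 d1 unfolding d_def by (intro mult_left_mono) auto
      thus ?thesis by (intro real_le_rsqrt) (simp add: power2_eq_square)
    qed
    hence e1: "dist (bs a1) b' \<le> L' * sqrt d" using b'(2) L'_nonneg mult_left_mono by (meson order_trans)
    have "dist (bs a1) (bs a2) \<le> dist (bs a1) b' + dist (bs a2) b'" using dist_triangle[of "bs a1" "bs a2" b'] by (simp add: dist_commute)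
    also have "\<dots> \<le> L' * sqrt d + 2 * sqrt (4/\<mu>) * sqrt K * sqrt d" using e1 e2 by linarith
    also have "\<dots> = C * sqrt d" unfolding C_def by (simp add: algebra_simps)
    finally show ?thesis unfolding d_def .
  qed
  have bs_cont: "continuous_on A bs"
    unfolding continuous_on_iff
  proof (intro ballI allI impI)
    fix x e assume x: "x \<in> A" and e: "(e::real) > 0"
    define r where "r = min 1 ((e / (C + 1))\<^sup>2)"
    have r0: "r > 0" unfolding r_def using e C0 by simp
    show "\<exists>d>0. \<forall>x'\<in>A. dist x' x < d \<longrightarrow> dist (bs x') (bs x) < e"
    proof (intro exI[of _ r] conjI ballI impI r0)
      fix x' assume x': "x' \<in> A" and dx: "dist x' x < r"
      have "dist (bs x') (bs x) \<le> C * sqrt (dist x' x)" by (rule hold[OF x' x]) (use dx r_def in auto)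
      also have "\<dots> \<le> C * (e / (C + 1))"
      proof (rule mult_left_mono[OF _ C0])
        have "sqrt (dist x' x) \<le> sqrt ((e / (C + 1))\<^sup>2)" using dx unfolding r_def by (intro real_sqrt_le_mono) auto
        thus "sqrt (dist x' x) \<le> e / (C + 1)" using e C0 by simp
      qed
      also have "\<dots> < e"
      proof -
        have "C * (e / (C + 1)) = e * (C / (C + 1))" by simp
        also have "\<dots> < e * 1" using e C0 by (intro mult_strict_left_mono) auto
        finally show ?thesis by simp
      qed
      finally show "dist (bs x') (bs x) < e" .
    qed
  qed
  have usc: "usc_at A (gstar f g) a" if a: "a \<in> A" for a
    unfolding usc_at_def
  proof (intro allI impI)
    fix V assume V: "open V \<and> gstar f g a \<subseteq> V"
    obtain U where U: "open U" "U \<inter> A = bs -` V \<inter> A"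
      using bs_cont V unfolding continuous_on_open_invariant by blast
    have "a \<in> U" using U(2) V uniq[OF a] a by blast
    moreover have "\<forall>a'\<in>U \<inter> A. gstar f g a' \<subseteq> V" using U(2) uniq by auto
    ultimately show "\<exists>U. open U \<and> a \<in> U \<and> (\<forall>a\<in>U \<inter> A. gstar f g a \<subseteq> V)" using U(1) by blast
  qed
  show ?thesis
  proof (intro conjI)
    show "continuous_on A (fstar f g)" using flip by (rule lipschitz_on_continuous_on)
    show "\<forall>a\<in>A. \<exists>b. gstar f g a = {b}" using uniq by blast
    show "\<forall>a\<in>A. usc_at A (gstar f g) a" using usc by blast
    show "continuous_on A (\<lambda>a. THE b. b \<in> gstar f g a)" using bs_cont unfolding bs_def .
    show "(L + L * L')-lipschitz_on A (fstar f g)" using flip unfolding K_def .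
    show "\<exists>\<delta>>0. \<forall>a1\<in>A. \<forall>a2\<in>A. dist a1 a2 < \<delta> \<longrightarrow>
         dist (THE b. b \<in> gstar f g a1) (THE b. b \<in> gstar f g a2)
           \<le> (L' + 2 * sqrt (4 / \<mu>) * sqrt (L + L * L')) * sqrt (dist a1 a2)"
      using hold unfolding bs_def C_def K_def by (intro exI[of _ 1]) auto
  qed
qed

end
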